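(* Let $\mathcal{A}\in\mathbb{R}^{d\times\cdots\times d}$ be an order-$k$ real tensor with the same dimension $d$ in all modes. For every level $1\le\ell\le k$, \[ d^{-(k-\ell)/2}\max_{\pi\in\mathcal{P}^\ell_{[k]}}\|\mathrm{Unfold}_\pi(\mathcal{A})\|_\sigma\le\|\mathcal{A}\|_\sigma\le\min_{\pi\in\mathcal{P}^\ell_{[k]}}\|\mathrm{Unfold}_\pi(\mathcal{A})\|_\sigma . \]
   Context: For a real tensor $\mathcal{T}\in\mathbb{R}^{e_1\times\cdots\times e_m}$, $\|\mathcal{T}\|_\sigma=\sup\{\sum t_{i_1\dots i_m}x^{(1)}_{i_1}\cdots x^{(m)}_{i_m}:\ \mathbf{x}_n\in\mathbb{R}^{e_n},\ \|\mathbf{x}_n\|_2=1\}$. $\mathcal{P}^\ell_{[k]}$ is the set of partitions of $[k]=\{1,\dots,k\}$ into exactly $\ell$ nonempty blocks. Unfolding: for $\pi=\{B_1,\dots,B_\ell\}$, $\mathrm{Unfold}_\pi(\mathcal{A})$ is the order-$\ell$ tensor of dimensions $(d^{|B_1|},\dots,d^{|B_\ell|})$ whose entry at $(m_1,\dots,m_\ell)$ is $a_{i_1\dots i_k}$, where $m_j$ corresponds to $(i_r)_{r\in B_j}$ under a fixed bijection $[d]^{B_j}\to[d^{|B_j|}]$. *)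

theory Defs
  imports "HOL-Analysis.Analysis" "HOL-Library.Disjoint_Sets"
begin

text \<open>A real tensor of order m with dimensions e 0, ..., e (m-1) is a function on index
  tuples (extensional functions i with i n < e n for n < m); 0-based indexing.\<close>

definition tensor_indices :: "nat \<Rightarrow> (nat \<Rightarrow> nat) \<Rightarrow> (nat \<Rightarrow> nat) set" where
  "tensor_indices m e = PiE {0..<m} (\<lambda>n. {0..<e n})"

definition spec_norm :: "nat \<Rightarrow> (nat \<Rightarrow> nat) \<Rightarrow> ((nat \<Rightarrow> nat) \<Rightarrow> real) \<Rightarrow> real" where
  "spec_norm m e T = Sup { (\<Sum>i\<in>tensor_indices m e. T i * (\<Prod>n<m. x n (i n))) | x.
       \<forall>n<m. (\<Sum>j<e n. (x n j)\<^sup>2) = 1 }"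

definition partitions :: "nat \<Rightarrow> nat \<Rightarrow> nat set set set" where
  "partitions k l = {P. partition_on {0..<k} P \<and> card P = l}"

definition ord_block :: "nat set set \<Rightarrow> nat \<Rightarrow> nat set" where
  "ord_block P j = (THE B. B \<in> P \<and> Min B = sorted_list_of_set (Min ` P) ! j)"

definition block_of :: "nat set set \<Rightarrow> nat \<Rightarrow> nat" where
  "block_of P r = (THE j. j < card P \<and> r \<in> ord_block P j)"

text \<open>Unfolding of an order-k tensor of dimension d along the partition P.  Mode j has
  dimension d ^ card (ord_block P j); the index m_j in [0, d^|B_j|) corresponds to the tuple
  (i_r) for r in B_j via base-d digits: i_r is the digit of m_j at position
  card {s in B_j. s < r} (fixed bijection).\<close>
definition unfold_dims :: "nat \<Rightarrow> nat set set \<Rightarrow> nat \<Rightarrow> nat" where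
  "unfold_dims d P j = d ^ card (ord_block P j)"

definition unfold :: "nat \<Rightarrow> nat \<Rightarrow> nat set set \<Rightarrow> ((nat \<Rightarrow> nat) \<Rightarrow> real) \<Rightarrow> (nat \<Rightarrow> nat) \<Rightarrow> real" where
  "unfold k d P A = (\<lambda>m. A (\<lambda>r\<in>{0..<k}.
      (m (block_of P r) div d ^ card {s \<in> ord_block P (block_of P r). s < r}) mod d))"

end

theory Submission
  imports Defs
begin



definition vals :: "nat \<Rightarrow> (nat \<Rightarrow> nat) \<Rightarrow> ((nat \<Rightarrow> nat) \<Rightarrow> real) \<Rightarrow> real set" where
  "vals m e T = { (\<Sum>i\<in>tensor_indices m e. T i * (\<Prod>n<m. x n (i n))) | x.
       \<forall>n<m. (\<Sum>j<e n. (x n j)\<^sup>2) = 1 }"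

lemma spec_norm_vals: "spec_norm m e T = Sup (vals m e T)"
  unfolding spec_norm_def vals_def by simp

lemma finite_ti[simp]: "finite (tensor_indices m e)"
  unfolding tensor_indices_def by (auto intro!: finite_PiE)

lemma ti_mem: "i \<in> tensor_indices m e \<Longrightarrow> n < m \<Longrightarrow> i n < e n"
  unfolding tensor_indices_def by (auto simp: PiE_def Pi_def)

lemma unit_abs_le: fixes e :: nat assumes "(\<Sum>j<e. (x j)\<^sup>2) = (1::real)" "j < e" shows "\<bar>x j\<bar> \<le> 1"
proof -
  have "(x j)\<^sup>2 \<le> (\<Sum>j<e. (x j)\<^sup>2)" using assms(2) by (intro member_le_sum[of j "{..<e}" "\<lambda>j. (x j)\<^sup>2"]) auto
  then have "(x j)\<^sup>2 \<le> 1" using assms(1) by simp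
  then show ?thesis by (simp add: abs_square_le_1)
qed

lemma vals_bdd: "bdd_above (vals m e T)"
proof (rule bdd_aboveI)
  fix v assume "v \<in> vals m e T"
  then obtain x where x: "\<forall>n<m. (\<Sum>j<e n. (x n j)\<^sup>2) = 1"
    and v: "v = (\<Sum>i\<in>tensor_indices m e. T i * (\<Prod>n<m. x n (i n)))"
    unfolding vals_def by blast
  have "v \<le> (\<Sum>i\<in>tensor_indices m e. \<bar>T i * (\<Prod>n<m. x n (i n))\<bar>)"
    unfolding v by (rule sum_mono) auto
  also have "\<dots> \<le> (\<Sum>i\<in>tensor_indices m e. \<bar>T i\<bar>)"
  proof (rule sum_mono)
    fix i assume i: "i \<in> tensor_indices m e"
    have "\<bar>\<Prod>n<m. x n (i n)\<bar> = (\<Prod>n<m. \<bar>x n (i n)\<bar>)" by (simp add: abs_prod)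
    also have "\<dots> \<le> 1"
      by (rule prod_le_1) (use unit_abs_le[OF x[rule_format] ti_mem[OF i]] in auto)
    finally show "\<bar>T i * (\<Prod>n<m. x n (i n))\<bar> \<le> \<bar>T i\<bar>"
      by (simp add: abs_mult mult_left_le)
  qed
  finally show "v \<le> (\<Sum>i\<in>tensor_indices m e. \<bar>T i\<bar>)" .
qed

lemma exists_unit: fixes m :: nat and e :: "nat \<Rightarrow> nat" assumes "\<forall>n<m. 1 \<le> e n"
  shows "\<exists>x. \<forall>n<m. (\<Sum>j<e n. (x n j)\<^sup>2) = (1::real)"
proof -
  define x where "x = (\<lambda>(n::nat) (j::nat). if j = 0 then 1 else (0::real))"
  have "\<forall>n<m. (\<Sum>j<e n. (x n j)\<^sup>2) = 1"
  proof (intro allI impI)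
    fix n assume "n < m"
    then have "0 \<in> {..<e n}" using assms by auto
    have "\<And>j. (x n j)\<^sup>2 = (if j = 0 then 1 else 0)" unfolding x_def by simp
    then show "(\<Sum>j<e n. (x n j)\<^sup>2) = 1" using \<open>0 \<in> {..<e n}\<close> by simp
  qed
  then show ?thesis by (rule exI[where x=x])
qed

lemma spec_upper:
  assumes "\<forall>n<m. (\<Sum>j<e n. (x n j)\<^sup>2) = 1"
  shows "(\<Sum>i\<in>tensor_indices m e. T i * (\<Prod>n<m. x n (i n))) \<le> spec_norm m e T"
  unfolding spec_norm_vals by (rule cSup_upper[OF _ vals_bdd]) (use assms in \<open>auto simp: vals_def\<close>)

lemma sqrt_prod: "sqrt (\<Prod>x\<in>A. f x) = (\<Prod>x\<in>A. sqrt (f x))"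
  by (induction A rule: infinite_finite_induct) (auto simp: real_sqrt_mult)

lemma ti_prod_sum:
  "(\<Sum>i\<in>tensor_indices m e. \<Prod>n<m. g n (i n)) = (\<Prod>n<m. \<Sum>j<e n. (g n j :: real))"
  using prod_sum_PiE[where A="{..<m}" and B="\<lambda>n. {..<e n}" and f=g] unfolding tensor_indices_def
  by (simp add: atLeast0LessThan)

lemma spec_abs:
  assumes x: "\<forall>n<m. (\<Sum>j<e n. (x n j)\<^sup>2) = 1" and m: "1 \<le> m"
  shows "\<bar>\<Sum>i\<in>tensor_indices m e. T i * (\<Prod>n<m. x n (i n))\<bar> \<le> spec_norm m e T"
proof -
  define x' where "x' = x(0 := (\<lambda>j. - x 0 j))"
  have x': "\<forall>n<m. (\<Sum>j<e n. (x' n j)\<^sup>2) = 1" proof (intro allI impI)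
    fix n assume "n < m"
    show "(\<Sum>j<e n. (x' n j)\<^sup>2) = 1"
    proof (cases "n = 0")
      case True then show ?thesis using x \<open>n < m\<close> by (simp add: x'_def)
    next
      case False then show ?thesis using x \<open>n < m\<close> by (simp add: x'_def)
    qed
  qed
  have p: "(\<Prod>n<m. x' n (i n)) = - (\<Prod>n<m. x n (i n))" for i
  proof -
    have z: "0 \<in> {..<m}" using m by auto
    have "(\<Prod>n<m. x' n (i n)) = x' 0 (i 0) * (\<Prod>n\<in>{..<m}-{0}. x' n (i n))"
      by (rule prod.remove[OF _ z]) simp
    also have "(\<Prod>n\<in>{..<m}-{0}. x' n (i n)) = (\<Prod>n\<in>{..<m}-{0}. x n (i n))"
      unfolding x'_def by (rule prod.cong) auto
    also have "x' 0 (i 0) = - x 0 (i 0)"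
      unfolding x'_def by simp
    also have "(\<Prod>n<m. x n (i n)) = x 0 (i 0) * (\<Prod>n\<in>{..<m}-{0}. x n (i n))"
      by (rule prod.remove[OF _ z]) simp
    ultimately show ?thesis by simp
  qed
  have "(\<Sum>i\<in>tensor_indices m e. T i * (\<Prod>n<m. x' n (i n))) \<le> spec_norm m e T"
    by (rule spec_upper[OF x'])
  then have "- (\<Sum>i\<in>tensor_indices m e. T i * (\<Prod>n<m. x n (i n))) \<le> spec_norm m e T"
    by (simp add: p sum_negf)
  moreover have "(\<Sum>i\<in>tensor_indices m e. T i * (\<Prod>n<m. x n (i n))) \<le> spec_norm m e T"
    by (rule spec_upper[OF x])
  ultimately show ?thesis by linarith
qed

lemma spec_nonneg:
  assumes "1 \<le> m" "\<forall>n<m. 1 \<le> e n" shows "0 \<le> spec_norm m e T"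
proof -
  from exists_unit[OF assms(2)] obtain y where y: "\<forall>n<m. (\<Sum>j<e n. (y n j)\<^sup>2) = (1::real)" ..
  show ?thesis using spec_abs[OF y assms(1), of T] by linarith
qed

lemma spec_L:
  "(\<Sum>i\<in>tensor_indices m e. T i * (\<Prod>n<m. w n (i n)))
     \<le> spec_norm m e T * sqrt (\<Sum>i\<in>tensor_indices m e. \<Prod>n<m. (w n (i n))\<^sup>2)"
proof -
  define N where "N n = (\<Sum>j<e n. (w n j)\<^sup>2)" for n
  have N0: "0 \<le> N n" for n unfolding N_def by (rule sum_nonneg) simp
  have sq: "sqrt (\<Sum>i\<in>tensor_indices m e. \<Prod>n<m. (w n (i n))\<^sup>2) = (\<Prod>n<m. sqrt (N n))"
    using ti_prod_sum[where m=m and e=e and g="\<lambda>n j. (w n j)\<^sup>2"] by (simp add: N_def sqrt_prod)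
  show ?thesis
  proof (cases "\<forall>n<m. 0 < N n")
    case True
    define x where "x n j = w n j / sqrt (N n)" for n j
    have x: "\<forall>n<m. (\<Sum>j<e n. (x n j)\<^sup>2) = 1"
    proof (intro allI impI)
      fix n assume "n < m"
      then have "0 < N n" using True by auto
      have "(\<Sum>j<e n. (x n j)\<^sup>2) = (\<Sum>j<e n. (w n j)\<^sup>2) / N n"
        unfolding x_def using N0[of n] by (simp add: power_divide sum_divide_distrib)
      then show "(\<Sum>j<e n. (x n j)\<^sup>2) = 1" using \<open>0 < N n\<close> by (simp add: N_def)
    qed
    define P where "P = (\<Prod>n<m. sqrt (N n))"
    have P: "0 < P" unfolding P_def using True by (auto intro!: prod_pos)
    have "(\<Sum>i\<in>tensor_indices m e. T i * (\<Prod>n<m. x n (i n)))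
        = (\<Sum>i\<in>tensor_indices m e. T i * (\<Prod>n<m. w n (i n))) / P"
      unfolding x_def P_def by (simp add: prod_dividef sum_divide_distrib)
    then have "(\<Sum>i\<in>tensor_indices m e. T i * (\<Prod>n<m. w n (i n))) / P \<le> spec_norm m e T"
      using spec_upper[OF x, of T] by simp
    then show ?thesis using P by (simp add: sq P_def[symmetric] pos_divide_le_eq)
  next
    case False
    then obtain n where n: "n < m" "N n \<le> 0" by (auto simp: not_less)
    then have Nn: "N n = 0" using N0[of n] by linarith
    have wz: "w n j = 0" if "j < e n" for j
      using Nn that unfolding N_def by (subst (asm) sum_nonneg_eq_0_iff) auto
    have "(\<Prod>n<m. w n (i n)) = 0" if "i \<in> tensor_indices m e" for i
      using n(1) wz[OF ti_mem[OF that n(1)]] by (auto intro: bexI[of _ n])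
    then have L: "(\<Sum>i\<in>tensor_indices m e. T i * (\<Prod>n<m. w n (i n))) = 0" by (auto intro!: sum.neutral)
    have Z: "(\<Prod>n<m. sqrt (N n)) = 0" using n(1) Nn by (auto intro: bexI[of _ n])
    show ?thesis unfolding L sq Z by simp
  qed
qed




locale part =
  fixes k :: nat and P :: "nat set set"
  assumes P: "partition_on {0..<k} P"
begin

lemma blocks_sub: "B \<in> P \<Longrightarrow> B \<subseteq> {0..<k}"
  using partition_onD1[OF P] by blast

lemma fin_P: "finite P"
proof -
  have "P \<subseteq> Pow {0..<k}" using blocks_sub by blast
  then show ?thesis by (rule finite_subset) simp
qed

lemma fin_B: "B \<in> P \<Longrightarrow> finite B"
  using blocks_sub finite_subset by blast

lemma ne_B: "B \<in> P \<Longrightarrow> B \<noteq> {}"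
  using partition_onD3[OF P] by blast

lemma disj: "B \<in> P \<Longrightarrow> B' \<in> P \<Longrightarrow> r \<in> B \<Longrightarrow> r \<in> B' \<Longrightarrow> B = B'"
  using partition_onD2[OF P] unfolding disjoint_def by blast

lemma Min_in_B: "B \<in> P \<Longrightarrow> Min B \<in> B"
  using fin_B ne_B by simp

lemma Min_inj: "inj_on Min P"
proof (rule inj_onI)
  fix B B' assume "B \<in> P" "B' \<in> P" "Min B = Min B'"
  then show "B = B'" using Min_in_B[of B] Min_in_B[of B'] disj[of B B' "Min B"] by simp
qed

abbreviation "L \<equiv> sorted_list_of_set (Min ` P)"

lemma len_L: "length L = card P"
  using fin_P Min_inj by (simp add: card_image)

lemma ob_prop: assumes "j < card P"
  shows "ord_block P j \<in> P \<and> Min (ord_block P j) = L ! j"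
proof -
  have "L ! j \<in> set L" using assms len_L by simp
  then have "L ! j \<in> Min ` P" using fin_P by simp
  then obtain B where B': "L ! j = Min B" "B \<in> P" by (rule imageE)
  note B = B'(2) B'(1)[symmetric]
  have "\<exists>!B. B \<in> P \<and> Min B = L ! j"
  proof (rule ex1I[of _ B])
    show "B \<in> P \<and> Min B = L ! j" using B by simp
    fix B' assume "B' \<in> P \<and> Min B' = L ! j"
    then show "B' = B" using inj_onD[OF Min_inj, of B' B] B by simp
  qed
  then show ?thesis unfolding ord_block_def by (rule theI')
qed

lemma ob_in: "j < card P \<Longrightarrow> ord_block P j \<in> P"
  using ob_prop by blast

lemma ob_inj: "inj_on (ord_block P) {..<card P}"
proof (rule inj_onI)
  fix j j' assume j: "j \<in> {..<card P}" and j': "j' \<in> {..<card P}"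
    and eq: "ord_block P j = ord_block P j'"
  have "L ! j = Min (ord_block P j)" using ob_prop[of j] j by simp
  also have "\<dots> = L ! j'" using ob_prop[of j'] j' eq by simp
  finally have "L ! j = L ! j'" .
  moreover have "distinct L" by simp
  ultimately show "j = j'" using j j' len_L nth_eq_iff_index_eq[of L j j'] by simp
qed

lemma ob_image: "ord_block P ` {..<card P} = P"
proof (rule card_subset_eq[OF fin_P])
  show "ord_block P ` {..<card P} \<subseteq> P" using ob_in by auto
  show "card (ord_block P ` {..<card P}) = card P"
    using ob_inj by (simp add: card_image)
qed

lemma ob_bij: "bij_betw (ord_block P) {..<card P} P"
  using ob_inj ob_image by (simp add: bij_betw_def)

lemma ob_eq: assumes "j < card P" "j' < card P" "r \<in> ord_block P j" "r \<in> ord_block P j'"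
  shows "j = j'"
proof -
  have "ord_block P j = ord_block P j'"
    using disj[OF ob_in[OF assms(1)] ob_in[OF assms(2)] assms(3) assms(4)] .
  then show ?thesis using inj_onD[OF ob_inj] assms(1,2) by simp
qed

lemma bo: assumes "r < k"
  shows "block_of P r < card P \<and> r \<in> ord_block P (block_of P r)"
proof -
  have "r \<in> \<Union>P" using partition_onD1[OF P] assms by auto
  then obtain B where B: "r \<in> B" "B \<in> P" by (rule UnionE)
  then have "B \<in> ord_block P ` {..<card P}" using ob_image by simp
  then obtain j where j: "B = ord_block P j" "j \<in> {..<card P}" by (rule imageE)
  have "\<exists>!j. j < card P \<and> r \<in> ord_block P j"
  proof (rule ex1I[of _ j])
    show "j < card P \<and> r \<in> ord_block P j" using j B by simp
    fix j' assume "j' < card P \<and> r \<in> ord_block P j'"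
    then show "j' = j" using ob_eq[of j' j r] j B by simp
  qed
  then show ?thesis unfolding block_of_def by (rule theI')
qed

lemma ob_sub: assumes "j < card P" shows "ord_block P j \<subseteq> {..<k}"
  using blocks_sub[OF ob_in[OF assms]] by auto

lemma bo_eq: assumes "j < card P" "r \<in> ord_block P j" shows "block_of P r = j"
proof -
  have "r < k" using ob_sub[OF assms(1)] assms(2) by auto
  then show ?thesis using bo[of r] ob_eq[of "block_of P r" j r] assms by simp
qed

lemma ob_fin: "j < card P \<Longrightarrow> finite (ord_block P j)"
  using fin_B ob_in by simp

lemma ob_disj: "j < card P \<Longrightarrow> j' < card P \<Longrightarrow> j \<noteq> j' \<Longrightarrow> ord_block P j \<inter> ord_block P j' = {}"
  using ob_eq by auto

lemma ob_Union: "(\<Union>j<card P. ord_block P j) = {..<k}"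
proof -
  have "(\<Union>j<card P. ord_block P j) = \<Union>P" using ob_image by simp
  also have "\<dots> = {..<k}" using partition_onD1[OF P] by auto
  finally show ?thesis .
qed

lemma sum_card: "(\<Sum>j<card P. card (ord_block P j)) = k"
proof -
  have "(\<Sum>j<card P. card (ord_block P j)) = card (\<Union>j<card P. ord_block P j)"
    by (rule card_UN_disjoint[symmetric]) (use ob_fin ob_disj in auto)
  then show ?thesis using ob_Union by simp
qed

lemma Min_ob: "j < card P \<Longrightarrow> Min (ord_block P j) \<in> ord_block P j"
  using Min_in_B ob_in by simp

end



definition pos :: "nat set \<Rightarrow> nat \<Rightarrow> nat" where "pos B r = card {s \<in> B. s < r}"
definition delta :: "nat \<Rightarrow> nat set \<Rightarrow> nat \<Rightarrow> nat \<Rightarrow> nat" where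
  "delta d B t = (\<lambda>r\<in>B. t div d ^ pos B r mod d)"
definition phi :: "nat \<Rightarrow> nat set \<Rightarrow> (nat \<Rightarrow> nat) \<Rightarrow> nat" where
  "phi d B f = (\<Sum>r\<in>B. f r * d ^ pos B r)"

lemma pos_mono: assumes "finite B" "r \<in> B" "r' \<in> B" "r < r'" shows "pos B r < pos B r'"
proof -
  have "{s \<in> B. s < r} \<subset> {s \<in> B. s < r'}" using assms by auto
  then show ?thesis unfolding pos_def by (rule psubset_card_mono[rotated]) (use assms in auto)
qed

lemma pos_lt: assumes "finite B" "r \<in> B" shows "pos B r < card B"
proof -
  have "{s \<in> B. s < r} \<subset> B" using assms by auto
  then show ?thesis unfolding pos_def using assms(1) by (rule psubset_card_mono[rotated])
qed

lemma pos_bij: assumes "finite B" shows "bij_betw (pos B) B {..<card B}"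
proof -
  have inj: "inj_on (pos B) B"
  proof (rule inj_onI)
    fix r r' assume "r \<in> B" "r' \<in> B" "pos B r = pos B r'"
    then show "r = r'" using pos_mono[OF assms, of r r'] pos_mono[OF assms, of r' r]
      by (cases r r' rule: linorder_cases) auto
  qed
  have "pos B ` B = {..<card B}"
  proof (rule card_subset_eq)
    show "pos B ` B \<subseteq> {..<card B}" using pos_lt[OF assms] by auto
    show "card (pos B ` B) = card {..<card B}" using inj by (simp add: card_image)
  qed simp
  then show ?thesis using inj by (simp add: bij_betw_def)
qed

lemma digits_sum: "(\<Sum>q<p. (t div d ^ q mod d) * d ^ q) = t mod d ^ p" for t d :: nat
proof (induction p)
  case 0 then show ?case by simp
next
  case (Suc p)
  have "t mod d ^ Suc p = d ^ p * (t div d ^ p mod d) + t mod d ^ p"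
    by (simp only: power_Suc2 mod_mult2_eq)
  then show ?case using Suc by (simp add: mult.commute)
qed

lemma phi_delta: assumes "finite B" "t < d ^ card B" shows "phi d B (delta d B t) = t"
proof -
  have "phi d B (delta d B t) = (\<Sum>r\<in>B. (t div d ^ pos B r mod d) * d ^ pos B r)"
    unfolding phi_def delta_def by (rule sum.cong) auto
  also have "\<dots> = (\<Sum>q<card B. (t div d ^ q mod d) * d ^ q)"
    by (rule sum.reindex_bij_betw[OF pos_bij[OF assms(1)], where g="\<lambda>q. (t div d ^ q mod d) * d ^ q"])
  also have "\<dots> = t" using assms(2) by (simp add: digits_sum)
  finally show ?thesis .
qed

lemma phi_cong: "(\<And>r. r \<in> B \<Longrightarrow> f r = g r) \<Longrightarrow> phi d B f = phi d B g"
  unfolding phi_def by (rule sum.cong) auto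

lemma delta_bij: assumes "finite B" "1 \<le> d"
  shows "bij_betw (delta d B) {..<d ^ card B} (PiE B (\<lambda>_. {..<d}))"
proof -
  have inj: "inj_on (delta d B) {..<d ^ card B}"
    by (rule inj_on_inverseI[where g="phi d B"]) (use phi_delta[OF assms(1)] in auto)
  have "delta d B ` {..<d ^ card B} = PiE B (\<lambda>_. {..<d})"
  proof (rule card_subset_eq)
    show "delta d B ` {..<d ^ card B} \<subseteq> PiE B (\<lambda>_. {..<d})"
      using assms(2) unfolding delta_def by (auto simp: PiE_def Pi_def)
    show "card (delta d B ` {..<d ^ card B}) = card (PiE B (\<lambda>_. {..<d}))"
      using inj assms(1) by (simp add: card_image card_PiE)
    show "finite (PiE B (\<lambda>_. {..<d}))" using assms(1) by (simp add: finite_PiE)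
  qed
  then show ?thesis using inj by (simp add: bij_betw_def)
qed




locale mainl = part k P for k P +
  fixes d :: nat
  assumes d: "1 \<le> d"
begin

abbreviation "l \<equiv> card P"
abbreviation "Bl j \<equiv> ord_block P j"

definition psi :: "(nat \<Rightarrow> nat) \<Rightarrow> nat \<Rightarrow> nat" where
  "psi m = (\<lambda>r\<in>{0..<k}. (m (block_of P r) div d ^ card {s \<in> ord_block P (block_of P r). s < r}) mod d)"

abbreviation "M \<equiv> tensor_indices l (unfold_dims d P)"
abbreviation "I \<equiv> tensor_indices k (\<lambda>_. d)"

lemma unfold_psi: "unfold k d P A m = A (psi m)"
  unfolding unfold_def psi_def by simp

lemma psi_blk: assumes "j < l" "r \<in> Bl j" shows "psi m r = delta d (Bl j) (m j) r"
proof -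
  have "r < k" using ob_sub[OF assms(1)] assms(2) by auto
  moreover have "block_of P r = j" using bo_eq[OF assms] .
  ultimately show ?thesis using assms(2) unfolding psi_def delta_def pos_def by simp
qed

lemma M_lt: "m \<in> M \<Longrightarrow> j < l \<Longrightarrow> m j < d ^ card (Bl j)"
  using ti_mem[of m l "unfold_dims d P" j] unfolding unfold_dims_def by simp

lemma phi_psi: assumes "m \<in> M" "j < l" shows "phi d (Bl j) (psi m) = m j"
proof -
  have "phi d (Bl j) (psi m) = phi d (Bl j) (delta d (Bl j) (m j))"
    by (rule phi_cong) (use psi_blk[OF assms(2)] in simp)
  also have "\<dots> = m j" by (rule phi_delta[OF ob_fin[OF assms(2)] M_lt[OF assms]])
  finally show ?thesis .
qed

lemma card_M: "card M = d ^ k"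
proof -
  have "card M = (\<Prod>j<l. d ^ card (Bl j))"
    unfolding tensor_indices_def unfold_dims_def by (simp add: card_PiE atLeast0LessThan)
  also have "\<dots> = d ^ (\<Sum>j<l. card (Bl j))" by (simp add: power_sum)
  also have "\<dots> = d ^ k" using sum_card by simp
  finally show ?thesis .
qed

lemma card_I: "card I = d ^ k"
  unfolding tensor_indices_def by (simp add: card_PiE)

lemma psi_I: "psi m \<in> I"
  using d unfolding psi_def tensor_indices_def by (auto simp: PiE_def Pi_def)

lemma psi_inj: "inj_on psi M"
proof (rule inj_onI)
  fix m m' assume m: "m \<in> M" and m': "m' \<in> M" and eq: "psi m = psi m'"
  show "m = m'"
  proof (rule ext)
    fix j show "m j = m' j"
    proof (cases "j < l")
      case True
      have "delta d (Bl j) (m j) = delta d (Bl j) (m' j)"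
      proof (rule ext)
        fix r show "delta d (Bl j) (m j) r = delta d (Bl j) (m' j) r"
        proof (cases "r \<in> Bl j")
          case True
          then show ?thesis using psi_blk[OF \<open>j < l\<close> True, of m] psi_blk[OF \<open>j < l\<close> True, of m'] eq
            by simp
        next
          case False
          then show ?thesis unfolding delta_def by simp
        qed
      qed
      then show ?thesis
        using inj_onD[OF bij_betw_imp_inj_on[OF delta_bij[OF ob_fin[OF True] d]]]
          M_lt[OF m True] M_lt[OF m' True] by simp
    next
      case False
      then have nj: "j \<notin> {0..<l}" by simp
      have "m j = undefined" by (rule PiE_arb[OF m[unfolded tensor_indices_def] nj])
      moreover have "m' j = undefined" by (rule PiE_arb[OF m'[unfolded tensor_indices_def] nj])
      ultimately show ?thesis by (rule trans[OF _ sym])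
    qed
  qed
qed

lemma psi_bij: "bij_betw psi M I"
proof -
  have "psi ` M = I"
  proof (rule card_subset_eq)
    show "psi ` M \<subseteq> I" using psi_I by auto
    show "card (psi ` M) = card I" using psi_inj card_M card_I by (simp add: card_image)
  qed simp
  then show ?thesis using psi_inj by (simp add: bij_betw_def)
qed

end



context mainl
begin

lemma prod_blocks: assumes "m \<in> M"
  shows "(\<Prod>j<l. \<Prod>r\<in>Bl j. g r (psi m r)) = (\<Prod>r<k. g r (psi m r))"
proof -
  have "(\<Prod>r\<in>(\<Union>j<l. Bl j). g r (psi m r)) = (\<Prod>j<l. \<Prod>r\<in>Bl j. g r (psi m r))"
    by (rule prod.UNION_disjoint) (use ob_fin ob_disj in auto)
  then show ?thesis using ob_Union by simp
qed

lemma upper: "spec_norm k (\<lambda>_. d) A \<le> spec_norm l (unfold_dims d P) (unfold k d P A)"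
proof -
  obtain x0 where x0: "\<forall>n<k. (\<Sum>j<d. (x0 n j)\<^sup>2) = (1::real)"
    using exists_unit[of k "\<lambda>_. d"] d by auto
  have ne: "vals k (\<lambda>_. d) A \<noteq> {}"
    using x0 unfolding vals_def by auto
  show ?thesis unfolding spec_norm_vals[of k]
  proof (rule cSup_least[OF ne])
    fix v assume "v \<in> vals k (\<lambda>_. d) A"
    then obtain x where x: "\<forall>n<k. (\<Sum>j<d. (x n j)\<^sup>2) = 1"
      and v: "v = (\<Sum>i\<in>I. A i * (\<Prod>n<k. x n (i n)))"
      unfolding vals_def by auto
    define y where "y j t = (\<Prod>r\<in>Bl j. x r (delta d (Bl j) t r))" for j t
    have y: "\<forall>j<l. (\<Sum>t<unfold_dims d P j. (y j t)\<^sup>2) = 1"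
    proof (intro allI impI)
      fix j assume j: "j < l"
      have "(\<Sum>t<unfold_dims d P j. (y j t)\<^sup>2)
          = (\<Sum>t<d ^ card (Bl j). (\<lambda>f. \<Prod>r\<in>Bl j. (x r (f r))\<^sup>2) (delta d (Bl j) t))"
        unfolding unfold_dims_def y_def by (simp add: prod_power_distrib)
      also have "\<dots> = (\<Sum>f\<in>PiE (Bl j) (\<lambda>_. {..<d}). \<Prod>r\<in>Bl j. (x r (f r))\<^sup>2)"
        by (rule sum.reindex_bij_betw[OF delta_bij[OF ob_fin[OF j] d]])
      also have "\<dots> = (\<Prod>r\<in>Bl j. \<Sum>s<d. (x r s)\<^sup>2)"
        by (rule prod_sum_PiE[symmetric]) (use ob_fin[OF j] in auto)
      also have "\<dots> = 1"
        by (rule prod.neutral) (use x ob_sub[OF j] in auto)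
      finally show "(\<Sum>t<unfold_dims d P j. (y j t)\<^sup>2) = 1" .
    qed
    have "v = (\<Sum>m\<in>M. A (psi m) * (\<Prod>r<k. x r (psi m r)))"
      unfolding v by (rule sum.reindex_bij_betw[OF psi_bij, symmetric])
    also have "\<dots> = (\<Sum>m\<in>M. unfold k d P A m * (\<Prod>j<l. y j (m j)))"
    proof (rule sum.cong[OF refl])
      fix m assume m: "m \<in> M"
      have yj: "y j (m j) = (\<Prod>r\<in>Bl j. x r (psi m r))" if j: "j < l" for j
        unfolding y_def using psi_blk[OF j] by (intro prod.cong) auto
      have "(\<Prod>j<l. y j (m j)) = (\<Prod>j<l. \<Prod>r\<in>Bl j. x r (psi m r))"
        using yj by (intro prod.cong) auto
      also have "\<dots> = (\<Prod>r<k. x r (psi m r))" by (rule prod_blocks[OF m])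
      finally show "A (psi m) * (\<Prod>r<k. x r (psi m r)) = unfold k d P A m * (\<Prod>j<l. y j (m j))"
        by (simp add: unfold_psi)
    qed
    also have "\<dots> \<le> spec_norm l (unfold_dims d P) (unfold k d P A)"
      by (rule spec_upper[OF y])
    finally show "v \<le> spec_norm l (unfold_dims d P) (unfold k d P A)" .
  qed
qed

end



context mainl
begin

definition rep :: "nat \<Rightarrow> nat" where "rep j = Min (Bl j)"
definition Reps :: "nat set" where "Reps = rep ` {..<l}"
definition R :: "nat set" where "R = {..<k} - Reps"
definition C :: "(nat \<Rightarrow> nat) set" where "C = PiE R (\<lambda>_. {..<d})"
definition W :: "(nat \<Rightarrow> (nat \<Rightarrow> nat) \<Rightarrow> real) \<Rightarrow> (nat \<Rightarrow> nat) \<Rightarrow> nat \<Rightarrow> nat \<Rightarrow> real" where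
  "W Y c r s = (if r \<in> R then (if s = c r then 1 else 0) else Y (block_of P r) (c(r := s)))"

lemma rep_in: "j < l \<Longrightarrow> rep j \<in> Bl j"
  unfolding rep_def by (rule Min_ob)

lemma rep_lt: assumes "j < l" shows "rep j < k"
  using rep_in[OF assms] ob_sub[OF assms] by auto

lemma bo_rep: assumes "j < l" shows "block_of P (rep j) = j"
  by (rule bo_eq[OF assms rep_in[OF assms]])

lemma rep_inj: "inj_on rep {..<l}"
proof (rule inj_onI)
  fix j j' assume a: "j \<in> {..<l}" "j' \<in> {..<l}" and eq: "rep j = rep j'"
  have "j = block_of P (rep j)" using bo_rep[of j] a(1) by simp
  also have "\<dots> = block_of P (rep j')" by (simp only: eq)
  also have "\<dots> = j'" using bo_rep[of j'] a(2) by simp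
  finally show "j = j'" .
qed

lemma Reps_sub: "Reps \<subseteq> {..<k}"
  unfolding Reps_def using rep_lt by auto

lemma card_Reps: "card Reps = l"
  unfolding Reps_def using rep_inj by (simp add: card_image)

lemma card_R: "card R = k - l"
  unfolding R_def using Reps_sub card_Reps by (simp add: card_Diff_subset finite_subset)

lemma fin_R: "finite R" unfolding R_def by simp

lemma card_C: "card C = d ^ (k - l)"
  unfolding C_def using fin_R card_R by (simp add: card_PiE)

lemma fin_C: "finite C" unfolding C_def using fin_R by (simp add: finite_PiE)

lemma B_R: assumes "j < l" "r \<in> Bl j" "r \<noteq> rep j" shows "r \<in> R"
proof -
  have "r < k" using ob_sub[OF assms(1)] assms(2) by auto
  moreover have "r \<notin> Reps"
  proof
    assume "r \<in> Reps"
    then obtain j' where j': "r = rep j'" "j' \<in> {..<l}" unfolding Reps_def by (rule imageE)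
    then have "block_of P r = j'" using bo_rep by simp
    moreover have "block_of P r = j" using bo_eq[OF assms(1,2)] .
    ultimately show False using j' assms(3) by simp
  qed
  ultimately show ?thesis unfolding R_def by simp
qed

lemma Reps_notR: "j < l \<Longrightarrow> rep j \<notin> R"
  unfolding R_def Reps_def by auto

lemma claimE:
  assumes Yloc: "\<And>j i i'. j < l \<Longrightarrow> (\<And>r. r \<in> Bl j \<Longrightarrow> i r = i' r) \<Longrightarrow> Y j i = Y j i'"
    and i: "i \<in> I"
  shows "(\<Sum>c\<in>C. \<Prod>r<k. W Y c r (i r)) = (\<Prod>j<l. Y j i)"
proof -
  define c0 where "c0 = restrict i R"
  have ilt: "r < k \<Longrightarrow> i r < d" for r using ti_mem[OF i] by simp
  have c0C: "c0 \<in> C" unfolding c0_def C_def R_def using ilt by auto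
  have z: "(\<Prod>r<k. W Y c r (i r)) = 0" if c: "c \<in> C - {c0}" for c
  proof -
    have "\<exists>r\<in>R. c r \<noteq> i r"
    proof (rule ccontr)
      assume na: "\<not> (\<exists>r\<in>R. c r \<noteq> i r)"
      have cC: "c \<in> PiE R (\<lambda>_. {..<d})" using c unfolding C_def by simp
      have c0C': "c0 \<in> PiE R (\<lambda>_. {..<d})" using c0C unfolding C_def by simp
      have "c = c0"
        by (rule PiE_ext[OF cC c0C']) (use na in \<open>simp add: c0_def\<close>)
      then show False using c by simp
    qed
    then obtain r where r: "r \<in> R" "c r \<noteq> i r" by (rule bexE)
    have "r \<in> {..<k}" using r(1) unfolding R_def by simp
    moreover have "W Y c r (i r) = 0" using r unfolding W_def by auto
    ultimately show ?thesis by (intro prod_zero) auto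
  qed
  have s1: "(\<Sum>c\<in>C. \<Prod>r<k. W Y c r (i r)) = (\<Prod>r<k. W Y c0 r (i r)) + (\<Sum>c\<in>C - {c0}. \<Prod>r<k. W Y c r (i r))"
    by (rule sum.remove[OF fin_C c0C])
  have s2: "(\<Sum>c\<in>C - {c0}. \<Prod>r<k. W Y c r (i r)) = 0"
    by (rule sum.neutral, rule ballI, rule z)
  have U: "{..<k} = R \<union> Reps" using Reps_sub unfolding R_def by auto
  have finReps: "finite Reps" using Reps_sub finite_subset by auto
  have s3: "(\<Prod>r<k. W Y c0 r (i r)) = (\<Prod>r\<in>R. W Y c0 r (i r)) * (\<Prod>r\<in>Reps. W Y c0 r (i r))"
    unfolding U by (rule prod.union_disjoint[OF fin_R finReps]) (auto simp: R_def)
  have s4: "(\<Prod>r\<in>R. W Y c0 r (i r)) = 1"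
    by (rule prod.neutral) (simp add: W_def c0_def)
  have "(\<Prod>r\<in>Reps. W Y c0 r (i r)) = (\<Prod>j<l. W Y c0 (rep j) (i (rep j)))"
    unfolding Reps_def using prod.reindex[OF rep_inj, of "\<lambda>r. W Y c0 r (i r)"] by (simp add: comp_def)
  also have "\<dots> = (\<Prod>j<l. Y j i)"
  proof (rule prod.cong[OF refl])
    fix j assume "j \<in> {..<l}"
    then have j: "j < l" by simp
    have "W Y c0 (rep j) (i (rep j)) = Y j (c0(rep j := i (rep j)))"
      unfolding W_def using Reps_notR[OF j] bo_rep[OF j] by simp
    also have "\<dots> = Y j i"
    proof (rule Yloc[OF j])
      fix r assume r: "r \<in> Bl j"
      show "(c0(rep j := i (rep j))) r = i r"
      proof (cases "r = rep j")
        case True then show ?thesis by simp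
      next
        case False then show ?thesis using B_R[OF j r False] unfolding c0_def by simp
      qed
    qed
    finally show "W Y c0 (rep j) (i (rep j)) = Y j i" .
  qed
  finally show ?thesis using s1 s2 s3 s4 by simp
qed

end



context mainl
begin

lemma lowerv:
  assumes k1: "1 \<le> k" and y: "\<forall>j<l. (\<Sum>t<unfold_dims d P j. (y j t)\<^sup>2) = 1"
  shows "(\<Sum>m\<in>M. unfold k d P A m * (\<Prod>j<l. y j (m j)))
           \<le> spec_norm k (\<lambda>_. d) A * sqrt (real d ^ (k - l))"
proof -
  define S where "S = spec_norm k (\<lambda>_. d) A"
  have S0: "0 \<le> S" unfolding S_def using spec_nonneg[OF k1] d by simp
  define Y where "Y j i = y j (phi d (Bl j) i)" for j i
  define Y2 where "Y2 j i = (Y j i)\<^sup>2" for j i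
  have Yloc: "Y j i = Y j i'" if "j < l" "\<And>r. r \<in> Bl j \<Longrightarrow> i r = i' r" for j i i'
  proof -
    have "phi d (Bl j) i = phi d (Bl j) i'" by (rule phi_cong) (rule that(2))
    then show ?thesis unfolding Y_def by simp
  qed
  have Y2loc: "Y2 j i = Y2 j i'" if "j < l" "\<And>r. r \<in> Bl j \<Longrightarrow> i r = i' r" for j i i'
    unfolding Y2_def using Yloc[OF that] by simp
  have W2: "(W Y c r s)\<^sup>2 = W Y2 c r s" for c r s unfolding W_def Y2_def by simp
  define Q where "Q c = (\<Sum>i\<in>I. \<Prod>r<k. (W Y c r (i r))\<^sup>2)" for c
  have Q0: "0 \<le> Q c" for c unfolding Q_def by (intro sum_nonneg prod_nonneg) auto
  have yY: "(\<Prod>j<l. y j (m j)) = (\<Prod>j<l. Y j (psi m))" if m: "m \<in> M" for m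
    unfolding Y_def using phi_psi[OF m] by (intro prod.cong) auto
  have "(\<Sum>m\<in>M. unfold k d P A m * (\<Prod>j<l. y j (m j)))
      = (\<Sum>m\<in>M. A (psi m) * (\<Prod>j<l. Y j (psi m)))"
    using yY by (intro sum.cong) (auto simp: unfold_psi)
  also have "\<dots> = (\<Sum>i\<in>I. A i * (\<Prod>j<l. Y j i))"
    by (rule sum.reindex_bij_betw[OF psi_bij, where g="\<lambda>i. A i * (\<Prod>j<l. Y j i)"])
  also have "\<dots> = (\<Sum>i\<in>I. A i * (\<Sum>c\<in>C. \<Prod>r<k. W Y c r (i r)))"
    using claimE[OF Yloc] by (intro sum.cong) auto
  also have "\<dots> = (\<Sum>c\<in>C. \<Sum>i\<in>I. A i * (\<Prod>r<k. W Y c r (i r)))"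
    by (simp add: sum_distrib_left sum.swap[of _ I])
  also have "\<dots> \<le> (\<Sum>c\<in>C. S * sqrt (Q c))"
    unfolding S_def Q_def by (rule sum_mono) (rule spec_L)
  also have "\<dots> = S * (\<Sum>c\<in>C. sqrt (Q c))" by (simp add: sum_distrib_left)
  also have "\<dots> \<le> S * sqrt (real d ^ (k - l))"
  proof (rule mult_left_mono[OF _ S0])
    have "(\<Sum>c\<in>C. Q c) = (\<Sum>c\<in>C. \<Sum>i\<in>I. \<Prod>r<k. W Y2 c r (i r))"
      unfolding Q_def W2 ..
    also have "\<dots> = (\<Sum>i\<in>I. \<Sum>c\<in>C. \<Prod>r<k. W Y2 c r (i r))" by (rule sum.swap)
    also have "\<dots> = (\<Sum>i\<in>I. \<Prod>j<l. Y2 j i)"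
      using claimE[OF Y2loc] by (intro sum.cong) auto
    also have "\<dots> = (\<Sum>m\<in>M. \<Prod>j<l. Y2 j (psi m))"
      by (rule sum.reindex_bij_betw[OF psi_bij, symmetric])
    also have "\<dots> = (\<Sum>m\<in>M. \<Prod>j<l. (y j (m j))\<^sup>2)"
      unfolding Y2_def Y_def using phi_psi by (intro sum.cong prod.cong) auto
    also have "\<dots> = (\<Prod>j<l. \<Sum>t<unfold_dims d P j. (y j t)\<^sup>2)"
      by (rule ti_prod_sum)
    also have "\<dots> = 1" using y by (intro prod.neutral) auto
    finally have sQ: "(\<Sum>c\<in>C. Q c) = 1" .
    have "(\<Sum>c\<in>C. sqrt (Q c))\<^sup>2 \<le> (\<Sum>c\<in>C. (sqrt (Q c))\<^sup>2) * card C"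
      by (rule sum_squared_le_sum_of_squares)
    also have "\<dots> = real d ^ (k - l)" using Q0 sQ card_C by simp
    finally show "(\<Sum>c\<in>C. sqrt (Q c)) \<le> sqrt (real d ^ (k - l))"
      by (rule real_le_rsqrt)
  qed
  finally show ?thesis unfolding S_def .
qed

end



context mainl
begin

lemma lower:
  assumes k1: "1 \<le> k"
  shows "spec_norm l (unfold_dims d P) (unfold k d P A) \<le> spec_norm k (\<lambda>_. d) A * sqrt (real d ^ (k - l))"
proof -
  have dims: "\<forall>n<l. 1 \<le> unfold_dims d P n" using d unfolding unfold_dims_def by simp
  obtain y0 where y0: "\<forall>n<l. (\<Sum>j<unfold_dims d P n. (y0 n j)\<^sup>2) = (1::real)"
    using exists_unit[OF dims] by auto
  have ne: "vals l (unfold_dims d P) (unfold k d P A) \<noteq> {}"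
    using y0 unfolding vals_def by auto
  show ?thesis unfolding spec_norm_vals[of l]
  proof (rule cSup_least[OF ne])
    fix v assume "v \<in> vals l (unfold_dims d P) (unfold k d P A)"
    then obtain y where y: "\<forall>n<l. (\<Sum>j<unfold_dims d P n. (y n j)\<^sup>2) = 1"
      and v: "v = (\<Sum>m\<in>M. unfold k d P A m * (\<Prod>n<l. y n (m n)))"
      unfolding vals_def by auto
    show "v \<le> spec_norm k (\<lambda>_. d) A * sqrt (real d ^ (k - l))"
      unfolding v by (rule lowerv[OF k1 y])
  qed
qed

end

lemma partitions_finite: "finite (partitions k l)"
proof (rule finite_subset)
  show "partitions k l \<subseteq> Pow (Pow {0..<k})"
    unfolding partitions_def using partition_onD1 by fastforce
qed simp

lemma partitions_ne: assumes "1 \<le> l" "l \<le> k" shows "partitions k l \<noteq> {}"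
proof -
  define P0 where "P0 = insert {l-1..<k} ((\<lambda>j. {j}) ` {..<l-1})"
  have "partition_on {0..<k} P0"
    unfolding partition_on_def disjoint_def P0_def using assms by auto
  moreover have "card P0 = l"
  proof -
    have "{l-1..<k} \<notin> (\<lambda>j. {j}) ` {..<l-1}"
    proof
      assume "{l-1..<k} \<in> (\<lambda>j. {j}) ` {..<l-1}"
      then obtain j where j: "{l-1..<k} = {j}" "j \<in> {..<l-1}" by (rule imageE)
      have "l - 1 \<in> {l-1..<k}" using assms by simp
      then have "l - 1 \<in> {j}" unfolding j(1) .
      then have "l - 1 = j" by simp
      then show False using j(2) by simp
    qed
    moreover have "card ((\<lambda>j. {j::nat}) ` {..<l-1}) = l - 1"
      by (subst card_image) (auto simp: inj_on_def)
    ultimately show ?thesis unfolding P0_def using assms by simp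
  qed
  ultimately show ?thesis unfolding partitions_def by blast
qed

lemma per_part:
  assumes "P \<in> partitions k l" "1 \<le> d" "1 \<le> l" "l \<le> k"
  shows "spec_norm k (\<lambda>_. d) A \<le> spec_norm l (unfold_dims d P) (unfold k d P A)"
    and "real d powr (- (real k - real l) / 2) * spec_norm l (unfold_dims d P) (unfold k d P A)
          \<le> spec_norm k (\<lambda>_. d) A"
proof -
  have Pp: "partition_on {0..<k} P" and cP: "card P = l" using assms(1) unfolding partitions_def by auto
  interpret mainl k P d using Pp assms(2) by (unfold_locales) auto
  show "spec_norm k (\<lambda>_. d) A \<le> spec_norm l (unfold_dims d P) (unfold k d P A)"
    using upper[of A] cP by simp
  define x where "x = real (k - l) / 2"
  have dpos: "0 < real d" using assms(2) by simp
  have "spec_norm l (unfold_dims d P) (unfold k d P A) \<le> spec_norm k (\<lambda>_. d) A * sqrt (real d ^ (k - l))"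
    using lower[of A] assms cP by simp
  also have "sqrt (real d ^ (k - l)) = real d powr x"
  proof -
    have "sqrt (real d ^ (k - l)) = (real d ^ (k - l)) powr (1/2)"
      by (simp add: powr_half_sqrt)
    also have "\<dots> = (real d powr real (k - l)) powr (1/2)" using dpos by (simp add: powr_realpow)
    also have "\<dots> = real d powr x" unfolding x_def by (simp add: powr_powr)
    finally show ?thesis .
  qed
  finally have le: "spec_norm l (unfold_dims d P) (unfold k d P A) \<le> spec_norm k (\<lambda>_. d) A * real d powr x" .
  have ex: "- (real k - real l) / 2 = - x" unfolding x_def of_nat_diff[OF assms(4)] by (simp add: field_simps)
  have "real d powr (- x) * spec_norm l (unfold_dims d P) (unfold k d P A)
        \<le> real d powr (- x) * (spec_norm k (\<lambda>_. d) A * real d powr x)"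
    by (rule mult_left_mono[OF le]) simp
  also have "\<dots> = spec_norm k (\<lambda>_. d) A"
    using dpos by (simp add: powr_minus field_simps)
  finally show "real d powr (- (real k - real l) / 2) * spec_norm l (unfold_dims d P) (unfold k d P A)
          \<le> spec_norm k (\<lambda>_. d) A" unfolding ex .
qed

theorem corollary4p11:
  fixes k d l :: nat and A :: "(nat \<Rightarrow> nat) \<Rightarrow> real"
  assumes "1 \<le> d" and "1 \<le> l" and "l \<le> k"
  shows "real d powr (- (real k - real l) / 2) *
           Max ((\<lambda>P. spec_norm l (unfold_dims d P) (unfold k d P A)) ` partitions k l)
         \<le> spec_norm k (\<lambda>_. d) A
       \<and> spec_norm k (\<lambda>_. d) A
         \<le> Min ((\<lambda>P. spec_norm l (unfold_dims d P) (unfold k d P A)) ` partitions k l)"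
proof -
  let ?f = "\<lambda>P. spec_norm l (unfold_dims d P) (unfold k d P A)"
  have fin: "finite (?f ` partitions k l)" using partitions_finite by simp
  have ne: "?f ` partitions k l \<noteq> {}" using partitions_ne[OF assms(2,3)] by simp
  have "Max (?f ` partitions k l) \<in> ?f ` partitions k l" by (rule Max_in[OF fin ne])
  then obtain P1 where P1: "Max (?f ` partitions k l) = ?f P1" "P1 \<in> partitions k l" by (rule imageE)
  have "Min (?f ` partitions k l) \<in> ?f ` partitions k l" by (rule Min_in[OF fin ne])
  then obtain P2 where P2: "Min (?f ` partitions k l) = ?f P2" "P2 \<in> partitions k l" by (rule imageE)
  show ?thesis
    unfolding P1(1) P2(1) using per_part[OF P1(2) assms] per_part[OF P2(2) assms] by simp
qed



end
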